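(* Let $v,w\colon\mathbb{R}^2\to\mathbb{R}$ and $u\colon\mathbb{R}\to\mathbb{R}$ be $C^\infty$ functions satisfying: (1) there exists $\delta>0$ such that $v$, $w$ and all their first partial derivatives are bounded on the set $\{(x,y)\colon x\in\mathbb{R},\ y\in(1-\delta,1+\delta)\cup(-1-\delta,-1+\delta)\}$; (2) there exists $a>0$ such that $w(x,1)>a$ and $w(x,-1)<-a$ for all $x\in\mathbb{R}$; (3) $u$ is $T$-periodic for some $T>0$ and $\frac1T\int_0^T u(t)\,dt=0$. For $\lambda\in\mathbb{R}$ consider the system $$\dot x=v(x,y),\qquad \dot y=w(x,y)+u(\lambda t).$$ Suppose that for every $\lambda$ all solutions of this system starting in the region $\{|y|\leqslant 1\}$ can be continued to all $t\geqslant 0$. Then there exists $\lambda_0>0$ such that for every $\lambda\geqslant\lambda_0$ the system has a solution $(x(t),y(t))$ with $|y(t)|<1$ for all $t\geqslant 0$.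
   Context: All functions are $C^\infty$ smooth. *)

theory Defs
  imports "HOL-Analysis.Analysis"
begin

fun Ck :: "nat \<Rightarrow> ('a::real_normed_vector \<Rightarrow> 'b::real_normed_vector) \<Rightarrow> bool" where
  "Ck 0 f = continuous_on UNIV f"
| "Ck (Suc k) f = (\<exists>f'. (\<forall>z. (f has_derivative f' z) (at z)) \<and> (\<forall>h. Ck k (\<lambda>z. f' z h)))"

definition C_inf :: "('a::real_normed_vector \<Rightarrow> 'b::real_normed_vector) \<Rightarrow> bool" where
  "C_inf f \<longleftrightarrow> (\<forall>k. Ck k f)"

definition is_solution ::
  "(real \<times> real \<Rightarrow> real) \<Rightarrow> (real \<times> real \<Rightarrow> real) \<Rightarrow> (real \<Rightarrow> real) \<Rightarrow> real
   \<Rightarrow> (real \<Rightarrow> real) \<Rightarrow> (real \<Rightarrow> real) \<Rightarrow> bool" where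
  "is_solution v w u lam X Y \<longleftrightarrow>
     (\<forall>t\<ge>0. (X has_real_derivative v (X t, Y t)) (at t within {0..}) \<and>
             (Y has_real_derivative w (X t, Y t) + u (lam * t)) (at t within {0..}))"

end

theory Submission
  imports Defs
begin


lemma Ck1_D:
  assumes "Ck 1 f"
  shows "\<exists>f'. (\<forall>z. (f has_derivative f' z) (at z)) \<and> (\<forall>h. continuous_on UNIV (\<lambda>z. f' z h))"
  using assms by simp

lemma sol_at:
  assumes "is_solution v w u lam X Y" "t > 0"
  shows "(X has_real_derivative v (X t, Y t)) (at t)"
    "(Y has_real_derivative w (X t, Y t) + u (lam * t)) (at t)"
proof -
  have i: "at t within {0..} = at t"
    by (rule at_within_interior) (use assms(2) in simp)
  show "(X has_real_derivative v (X t, Y t)) (at t)"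
    "(Y has_real_derivative w (X t, Y t) + u (lam * t)) (at t)"
    using assms unfolding is_solution_def i[symmetric] by auto
qed

lemma sol_cont:
  assumes "is_solution v w u lam X Y"
  shows "continuous_on {0..} X" "continuous_on {0..} Y"
  using assms unfolding is_solution_def
  by (auto intro!: DERIV_continuous_on)

lemma lip:
  fixes f :: "real \<times> real \<Rightarrow> real"
  assumes "Ck 1 f"
  shows "\<exists>L\<ge>0. \<forall>p\<in>cball 0 R. \<forall>q\<in>cball 0 R. \<bar>f p - f q\<bar> \<le> L * dist p q"
proof -
  obtain f' where d: "\<And>z. (f has_derivative f' z) (at z)" and c: "\<And>h. continuous_on UNIV (\<lambda>z. f' z h)"
    using Ck1_D[OF assms] by blast
  have cb: "compact (cball (0::real\<times>real) R)" by simp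
  obtain M1 where M1: "\<And>z. z \<in> cball 0 R \<Longrightarrow> \<bar>f' z (1,0)\<bar> \<le> M1"
    using compact_imp_bounded[OF compact_continuous_image[OF continuous_on_subset[OF c[of "(1,0)"]] cb]]
    unfolding bounded_iff by fastforce
  obtain M2 where M2: "\<And>z. z \<in> cball 0 R \<Longrightarrow> \<bar>f' z (0,1)\<bar> \<le> M2"
    using compact_imp_bounded[OF compact_continuous_image[OF continuous_on_subset[OF c[of "(0,1)"]] cb]]
    unfolding bounded_iff by fastforce
  have on: "onorm (f' z) \<le> \<bar>M1\<bar> + \<bar>M2\<bar>" if z: "z \<in> cball 0 R" for z
  proof (rule onorm_le)
    fix h :: "real \<times> real"
    obtain h1 h2 where h: "h = (h1, h2)" by (cases h)
    have lin: "bounded_linear (f' z)" using d[of z] by (simp add: has_derivative_def)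
    have hh: "h = h1 *\<^sub>R (1,0) + h2 *\<^sub>R (0,1)" by (simp add: h)
    have e0: "f' z (h1 *\<^sub>R (1,0) + h2 *\<^sub>R (0,1)) = h1 * f' z (1,0) + h2 * f' z (0,1)"
      by (simp only: linear_add[OF bounded_linear.linear[OF lin]] linear_scale[OF bounded_linear.linear[OF lin]] real_scaleR_def)
    have e: "f' z h = h1 * f' z (1,0) + h2 * f' z (0,1)"
      using e0 hh by simp
    have n1: "\<bar>h1\<bar> \<le> norm h" "\<bar>h2\<bar> \<le> norm h" using h
      by (auto simp: norm_Pair real_le_rsqrt)
    have "\<bar>h1 * f' z (1,0)\<bar> \<le> norm h * \<bar>M1\<bar>"
      unfolding abs_mult using n1 M1[OF z] by (intro mult_mono) auto
    moreover have "\<bar>h2 * f' z (0,1)\<bar> \<le> norm h * \<bar>M2\<bar>"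
      unfolding abs_mult using n1 M2[OF z] by (intro mult_mono) auto
    ultimately show "norm (f' z h) \<le> (\<bar>M1\<bar> + \<bar>M2\<bar>) * norm h"
      unfolding e real_norm_def by (smt (verit) distrib_right mult.commute)
  qed
  show ?thesis
  proof (intro exI[of _ "\<bar>M1\<bar> + \<bar>M2\<bar>"] conjI ballI)
    fix p q assume p: "p \<in> cball (0::real\<times>real) R" and q: "q \<in> cball (0::real\<times>real) R"
    have "norm (f p - f q) \<le> (\<bar>M1\<bar> + \<bar>M2\<bar>) * norm (p - q)"
      by (rule differentiable_bound[OF convex_cball _ on p q])
        (auto intro: has_derivative_at_withinI d)
    then show "\<bar>f p - f q\<bar> \<le> (\<bar>M1\<bar> + \<bar>M2\<bar>) * dist p q" by (simp add: dist_norm)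
  qed simp
qed



lemma key_ineq:
  fixes a b p q L :: real
  assumes "L \<ge> 0" "\<bar>p\<bar> \<le> L * sqrt (a^2+b^2)" "\<bar>q\<bar> \<le> L * sqrt (a^2+b^2)"
  shows "2*a*p + 2*b*q \<le> 4*L*(a^2+b^2)"
proof -
  define r where "r = sqrt (a^2+b^2)"
  have r2: "r^2 = a^2+b^2" unfolding r_def by simp
  have ra: "\<bar>a\<bar> \<le> r" unfolding r_def by (simp add: real_le_rsqrt)
  have rb: "\<bar>b\<bar> \<le> r" unfolding r_def by (simp add: real_le_rsqrt)
  have "a*p \<le> \<bar>a\<bar> * \<bar>p\<bar>" by (metis abs_ge_self abs_mult)
  also have "\<dots> \<le> r * (L*r)" using assms(2) ra by (intro mult_mono) (auto simp: r_def)
  finally have 1: "a*p \<le> L*r^2" by (simp add: power2_eq_square algebra_simps)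
  have "b*q \<le> \<bar>b\<bar> * \<bar>q\<bar>" by (metis abs_ge_self abs_mult)
  also have "\<dots> \<le> r * (L*r)" using assms(3) rb by (intro mult_mono) (auto simp: r_def)
  finally have 2: "b*q \<le> L*r^2" by (simp add: power2_eq_square algebra_simps)
  have "L*r^2 = L*(a^2+b^2)" by (simp add: r2)
  then show ?thesis using 1 2 by linarith
qed

lemma gron:
  assumes s1: "is_solution v w u lam X Y" and s2: "is_solution v w u lam X' Y'"
    and L: "L \<ge> 0"
    and lv: "\<forall>p\<in>K. \<forall>q\<in>K. \<bar>v p - v q\<bar> \<le> L * dist p q"
    and lw: "\<forall>p\<in>K. \<forall>q\<in>K. \<bar>w p - w q\<bar> \<le> L * dist p q"
    and t: "t \<ge> 0"
    and inK: "\<forall>s\<in>{0..t}. (X s, Y s) \<in> K \<and> (X' s, Y' s) \<in> K"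
  shows "(X t - X' t)^2 + (Y t - Y' t)^2 \<le> exp (4*L*t) * ((X 0 - X' 0)^2 + (Y 0 - Y' 0)^2)"
proof (cases "t = 0")
  case True then show ?thesis by simp
next
  case False
  with t have tp: "t > 0" by simp
  define d where "d s = (X s - X' s)^2 + (Y s - Y' s)^2" for s
  define h where "h s = exp (- (4*L * s)) * d s" for s
  define D where "D s = 2*(X s - X' s)*(v (X s, Y s) - v (X' s, Y' s)) + 2*(Y s - Y' s)*(w (X s, Y s) - w (X' s, Y' s))" for s
  have hder: "(h has_real_derivative exp (- (4*L * s)) * (D s - 4*L * d s)) (at s)" if "s > 0" for s
  proof -
    note a = sol_at[OF s1 that] sol_at[OF s2 that]
    show ?thesis unfolding h_def d_def D_def
      by (rule derivative_eq_intros a refl | simp)+ (simp add: algebra_simps)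
  qed
  have cX: "continuous_on {0..t} X" "continuous_on {0..t} Y" "continuous_on {0..t} X'" "continuous_on {0..t} Y'"
    using sol_cont[OF s1] sol_cont[OF s2] by (auto elim: continuous_on_subset)
  have ch: "continuous_on {0..t} h" unfolding h_def d_def
    by (intro continuous_intros cX)
  obtain l z where z: "0 < z" "z < t" "DERIV h z :> l" "h t - h 0 = (t - 0) * l"
    using MVT[OF tp ch] hder by (meson real_differentiable_def)
  have l: "l = exp (- (4*L*z)) * (D z - 4*L*d z)"
    using DERIV_unique[OF z(3) hder[OF z(1)]] .
  have dist_eq: "dist (X z, Y z) (X' z, Y' z) = sqrt ((X z - X' z)^2 + (Y z - Y' z)^2)"
    by (simp add: dist_Pair_Pair dist_real_def)
  have inz: "(X z, Y z) \<in> K" "(X' z, Y' z) \<in> K" using inK z by auto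
  have "D z \<le> 4*L*d z" unfolding D_def d_def
    by (rule key_ineq[OF L]) (use lv lw inz dist_eq in metis)+
  then have "l \<le> 0" unfolding l by (simp add: mult_nonneg_nonpos)
  then have "t * l \<le> 0" using tp by (simp add: mult_nonneg_nonpos)
  then have "h t \<le> h 0" using z(4) by simp
  then have "exp (- (4*L*t)) * d t \<le> d 0" unfolding h_def by simp
  then have "exp (4*L*t) * (exp (- (4*L*t)) * d t) \<le> exp (4*L*t) * d 0"
    by (intro mult_left_mono) auto
  moreover have "exp (4*L*t) * (exp (- (4*L * t)) * d t) = d t"
    by (simp add: mult.assoc[symmetric] exp_add[symmetric])
  ultimately have "d t \<le> exp (4*L*t) * d 0" by linarith
  then show ?thesis by (simp only: d_def)
qed



lemma dist_sq:
  fixes a b c d :: real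
  shows "(dist (a,b) (c,d))^2 = (a - c)^2 + (b - d)^2"
  by (simp add: dist_Pair_Pair dist_real_def)

lemma contdep:
  assumes lipv: "\<And>R. \<exists>L\<ge>0. \<forall>p\<in>cball 0 R. \<forall>q\<in>cball 0 R. \<bar>v p - v q\<bar> \<le> L * dist p q"
    and lipw: "\<And>R. \<exists>L\<ge>0. \<forall>p\<in>cball 0 R. \<forall>q\<in>cball 0 R. \<bar>w p - w q\<bar> \<le> L * dist p q"
    and s1: "is_solution v w u lam X Y" and tau: "\<tau> \<ge> 0" and m: "m > 0"
  shows "\<exists>\<epsilon>>0. \<forall>X' Y'. is_solution v w u lam X' Y' \<and> dist (X' 0, Y' 0) (X 0, Y 0) < \<epsilon>
            \<longrightarrow> (\<forall>s\<in>{0..\<tau>}. \<bar>Y' s - Y s\<bar> < m)"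
proof -
  have cP: "continuous_on {0..\<tau>} (\<lambda>s. (X s, Y s))"
    using sol_cont[OF s1] by (auto intro!: continuous_intros elim: continuous_on_subset)
  obtain R0 where R0: "\<And>s. s \<in> {0..\<tau>} \<Longrightarrow> norm (X s, Y s) \<le> R0"
    using compact_imp_bounded[OF compact_continuous_image[OF cP compact_Icc]]
    unfolding bounded_iff by (metis imageI)
  define R where "R = R0 + 1"
  obtain Lv where Lv: "Lv \<ge> 0" "\<forall>p\<in>cball 0 R. \<forall>q\<in>cball 0 R. \<bar>v p - v q\<bar> \<le> Lv * dist p q"
    using lipv by blast
  obtain Lw where Lw: "Lw \<ge> 0" "\<forall>p\<in>cball 0 R. \<forall>q\<in>cball 0 R. \<bar>w p - w q\<bar> \<le> Lw * dist p q"
    using lipw by blast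
  define L where "L = max Lv Lw"
  have L0: "L \<ge> 0" using Lv unfolding L_def by simp
  have lv: "\<forall>p\<in>cball 0 R. \<forall>q\<in>cball 0 R. \<bar>v p - v q\<bar> \<le> L * dist p q"
  proof (intro ballI)
    fix p q assume "p \<in> cball (0::real\<times>real) R" "q \<in> cball (0::real\<times>real) R"
    then have "\<bar>v p - v q\<bar> \<le> Lv * dist p q" using Lv by blast
    also have "\<dots> \<le> L * dist p q" unfolding L_def by (intro mult_right_mono) auto
    finally show "\<bar>v p - v q\<bar> \<le> L * dist p q" .
  qed
  have lw: "\<forall>p\<in>cball 0 R. \<forall>q\<in>cball 0 R. \<bar>w p - w q\<bar> \<le> L * dist p q"
  proof (intro ballI)
    fix p q assume "p \<in> cball (0::real\<times>real) R" "q \<in> cball (0::real\<times>real) R"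
    then have "\<bar>w p - w q\<bar> \<le> Lw * dist p q" using Lw by blast
    also have "\<dots> \<le> L * dist p q" unfolding L_def by (intro mult_right_mono) auto
    finally show "\<bar>w p - w q\<bar> \<le> L * dist p q" .
  qed
  define m' where "m' = min m 1"
  have m'0: "m' > 0" "m' \<le> 1" "m' \<le> m" using m unfolding m'_def by auto
  define E where "E = exp (2*L*\<tau>)"
  have E1: "E \<ge> 1" unfolding E_def using L0 tau by simp
  have E2: "E^2 = exp (4*L*\<tau>)" unfolding E_def by (simp add: power2_eq_square exp_add[symmetric])
  define \<epsilon> where "\<epsilon> = m' / (2 * E)"
  have eps0: "\<epsilon> > 0" unfolding \<epsilon>_def using m'0 E1 by simp
  have epsle: "\<epsilon> \<le> m'/2" unfolding \<epsilon>_def using m'0 E1 by (simp add: divide_le_eq mult_le_cancel_left1)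
  have epssq: "exp (4*L*\<tau>) * \<epsilon>^2 = (m'/2)^2"
    unfolding \<epsilon>_def E2[symmetric] using E1 by (simp add: power_divide power_mult_distrib)
  show ?thesis
  proof (intro exI[of _ \<epsilon>] conjI eps0 allI impI)
    fix X' Y' assume a: "is_solution v w u lam X' Y' \<and> dist (X' 0, Y' 0) (X 0, Y 0) < \<epsilon>"
    then have s2: "is_solution v w u lam X' Y'" and d0: "dist (X' 0, Y' 0) (X 0, Y 0) < \<epsilon>" by auto
    define f where "f s = dist (X' s, Y' s) (X s, Y s)" for s
    have cP': "continuous_on {0..\<tau>} (\<lambda>s. (X' s, Y' s))"
      using sol_cont[OF s2] by (auto intro!: continuous_intros elim: continuous_on_subset)
    have cf: "continuous_on {0..\<tau>} f" unfolding f_def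
      by (intro continuous_on_dist cP cP')
    have claim: "\<forall>s\<in>{0..\<tau>}. f s < m'/2"
    proof (rule ccontr)
      assume neg: "\<not> (\<forall>s\<in>{0..\<tau>}. f s < m'/2)"
      define S where "S = {0..\<tau>} \<inter> f -` {m'/2..}"
      have Sne: "S \<noteq> {}" using neg unfolding S_def by force
      have Scl: "closed S" unfolding S_def by (rule continuous_closed_preimage[OF cf]) auto
      have Sbd: "bdd_below S" unfolding S_def by (rule bdd_belowI[of _ 0]) auto
      define s0 where "s0 = Inf S"
      have s0S: "s0 \<in> S" unfolding s0_def by (rule closed_contains_Inf[OF Sne Sbd Scl])
      have s0r: "0 \<le> s0" "s0 \<le> \<tau>" "f s0 \<ge> m'/2" using s0S unfolding S_def by auto
      have low: "\<And>\<sigma>. \<sigma> \<in> S \<Longrightarrow> s0 \<le> \<sigma>" unfolding s0_def using Sbd by (simp add: cInf_lower)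
      have f0: "f 0 < m'/2" using d0 epsle unfolding f_def by simp
      obtain \<sigma> where \<sigma>: "0 \<le> \<sigma>" "\<sigma> \<le> s0" "f \<sigma> = m'/2"
      proof -
        have "continuous_on {0..s0} f" using cf s0r by (auto elim: continuous_on_subset)
        then show ?thesis using IVT'[of f 0 "m'/2" s0] f0 s0r that by auto
      qed
      have "\<sigma> \<in> S" unfolding S_def using \<sigma> s0r by auto
      then have "s0 \<le> \<sigma>" by (rule low)
      with \<sigma> have fs0: "f s0 = m'/2" by simp
      have fle: "f s \<le> m'/2" if "s \<in> {0..s0}" for s
      proof (rule ccontr)
        assume "\<not> f s \<le> m'/2"
        then have "s \<in> S" unfolding S_def using that s0r by auto
        then have "s0 \<le> s" by (rule low)
        then show False using that fs0 \<open>\<not> f s \<le> m'/2\<close> by auto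
      qed
      have inK: "\<forall>s\<in>{0..s0}. (X' s, Y' s) \<in> cball 0 R \<and> (X s, Y s) \<in> cball 0 R"
      proof
        fix s assume s: "s \<in> {0..s0}"
        have nP: "norm (X s, Y s) \<le> R0" using R0 s s0r by auto
        have "norm (X' s, Y' s) \<le> norm (X s, Y s) + dist (X' s, Y' s) (X s, Y s)"
          by (metis dist_norm norm_triangle_sub add.commute)
        also have "\<dots> \<le> R0 + m'/2" using nP fle[OF s] unfolding f_def by simp
        finally show "(X' s, Y' s) \<in> cball 0 R \<and> (X s, Y s) \<in> cball 0 R"
          using nP m'0 unfolding R_def by simp
      qed
      have g: "(X' s0 - X s0)^2 + (Y' s0 - Y s0)^2 \<le> exp (4*L * s0) * ((X' 0 - X 0)^2 + (Y' 0 - Y 0)^2)"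
        by (rule gron[OF s2 s1 L0 lv lw s0r(1) inK])
      have "(f s0)^2 \<le> exp (4*L * s0) * (f 0)^2"
        using g unfolding f_def dist_sq .
      also have "\<dots> \<le> exp (4*L*\<tau>) * (f 0)^2"
        using L0 s0r by (intro mult_right_mono) (auto simp: mult_left_mono)
      also have "\<dots> < exp (4*L*\<tau>) * \<epsilon>^2"
        using d0 unfolding f_def by (intro mult_strict_left_mono power_strict_mono) auto
      finally have "(f s0)^2 < (m'/2)^2" using epssq by simp
      then show False using fs0 by simp
    qed
    show "\<forall>s\<in>{0..\<tau>}. \<bar>Y' s - Y s\<bar> < m"
    proof
      fix s assume s: "s \<in> {0..\<tau>}"
      have "\<bar>Y' s - Y s\<bar> \<le> f s" unfolding f_def dist_Pair_Pair dist_real_def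
        by (simp add: real_le_rsqrt)
      then show "\<bar>Y' s - Y s\<bar> < m" using claim s m'0 by fastforce
    qed
  qed
qed



lemma U_props:
  fixes u :: "real \<Rightarrow> real"
  assumes cu: "continuous_on UNIV u" and T: "T > 0" and per: "\<And>t. u (t + T) = u t"
    and int0: "integral {0..T} u = 0"
  shows "\<exists>U M. U 0 = 0 \<and> (\<forall>s\<ge>0. (U has_real_derivative u s) (at s within {0..})) \<and> (\<forall>s\<ge>0. \<bar>U s\<bar> \<le> M)"
proof -
  define U where "U s = integral {0..s} u" for s
  have Uw: "(U has_real_derivative u s) (at s within {0..})" if s: "s \<ge> 0" for s
  proof -
    have d: "(U has_real_derivative u s) (at s within {0..s+1})"
      unfolding U_def by (rule integral_has_real_derivative) (use s cu in \<open>auto elim: continuous_on_subset\<close>)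
    have "at s within {0..s+1} = at s within {0..}"
      by (rule at_within_nhd[of _ "{..<s+1}"]) auto
    then show ?thesis using d by simp
  qed
  have Ua: "(U has_real_derivative u s) (at s)" if s: "s > 0" for s
  proof -
    have "at s within {0..} = at s" by (rule at_within_interior) (use s in simp)
    then show ?thesis using Uw[of s] s by simp
  qed
  have Uc: "continuous_on {0..} U" by (rule DERIV_continuous_on[OF Uw]) auto
  have perU: "U (s + T) = U s" if s: "s \<ge> 0" for s
  proof -
    define V where "V s = U (s + T) - U s" for s
    have "V s = V 0"
    proof (cases "s = 0")
      case False
      with s have sp: "s > 0" by simp
      have Vd: "(V has_real_derivative 0) (at x)" if "x > 0" for x
      proof -
        have a1: "((\<lambda>z. U (z+T)) has_real_derivative u (x+T) * 1) (at x)"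
          by (rule DERIV_chain2[OF Ua]) (use that T in \<open>auto intro!: derivative_eq_intros\<close>)
        have "(V has_real_derivative u (x + T) * 1 - u x) (at x)" unfolding V_def
          by (rule DERIV_diff[OF a1 Ua[OF that]])
        then show ?thesis using per[of x] by simp
      qed
      have cV: "continuous_on {0..s} V" unfolding V_def
        by (intro continuous_intros continuous_on_compose2[OF Uc]) (use T Uc in \<open>auto elim: continuous_on_subset\<close>)
      obtain l z where z: "0 < z" "z < s" "DERIV V z :> l" "V s - V 0 = (s - 0) * l"
        using MVT[OF sp cV] Vd by (meson real_differentiable_def)
      have "l = 0" using DERIV_unique[OF z(3) Vd[OF z(1)]] .
      then show ?thesis using z(4) by simp
    qed simp
    moreover have "V 0 = 0" unfolding V_def U_def using int0 by simp
    ultimately show ?thesis unfolding V_def by simp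
  qed
  have cT: "continuous_on {0..T} U" using Uc by (rule continuous_on_subset) auto
  obtain M where M: "\<And>s. s \<in> {0..T} \<Longrightarrow> \<bar>U s\<bar> \<le> M"
    using compact_imp_bounded[OF compact_continuous_image[OF cT compact_Icc]]
    unfolding bounded_iff by (metis imageI real_norm_def)
  have ind: "\<forall>s. 0 \<le> s \<and> s \<le> real (Suc n) * T \<longrightarrow> \<bar>U s\<bar> \<le> M" for n
  proof (induction n)
    case 0 then show ?case using M by auto
  next
    case (Suc n)
    show ?case
    proof (intro allI impI)
      fix s assume s: "0 \<le> s \<and> s \<le> real (Suc (Suc n)) * T"
      show "\<bar>U s\<bar> \<le> M"
      proof (cases "s \<le> T")
        case True then show ?thesis using M s by auto
      next
        case False
        then have "0 \<le> s - T" "s - T \<le> real (Suc n) * T" using s by (auto simp: algebra_simps)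
        then have "\<bar>U (s - T)\<bar> \<le> M" using Suc.IH by blast
        moreover have "U (s - T + T) = U (s - T)" by (rule perU) fact
        ultimately show ?thesis by simp
      qed
    qed
  qed
  have bnd: "\<bar>U s\<bar> \<le> M" if s: "s \<ge> 0" for s
  proof -
    obtain n where n: "s / T \<le> real n" using real_arch_simple by blast
    then have "s \<le> real (Suc n) * T" using T by (simp add: divide_le_eq algebra_simps)
    then show ?thesis using ind s by blast
  qed
  show ?thesis
    by (intro exI[of _ U] exI[of _ M] conjI allI impI Uw bnd) (simp_all add: U_def)
qed



lemma gderiv:
  assumes sol: "is_solution v w u lam X Y" and lam: "lam > 0"
    and Ud: "\<forall>s\<ge>0. (U has_real_derivative u s) (at s within {0..})" and t: "t \<ge> 0"
  shows "((\<lambda>t. Y t - U (lam*t) / lam) has_real_derivative w (X t, Y t)) (at t within {0..})"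
proof -
  have img: "(\<lambda>t. lam*t) ` {0..} = {0..}"
  proof
    show "(\<lambda>t. lam*t) ` {0..} \<subseteq> {0..}" using lam by auto
    show "{0..} \<subseteq> (\<lambda>t. lam*t) ` {0..}"
    proof
      fix x :: real assume "x \<in> {0..}"
      then show "x \<in> (\<lambda>t. lam*t) ` {0..}" using lam by (intro image_eqI[of _ _ "x/lam"]) auto
    qed
  qed
  have d1: "(U has_real_derivative u (lam*t)) (at ((\<lambda>t. lam*t) t) within ((\<lambda>t. lam*t) ` {0..}))"
    unfolding img using Ud t lam by simp
  have d2: "((\<lambda>t. lam*t) has_real_derivative lam) (at t within {0..})"
    by (auto intro!: derivative_eq_intros)
  have d3: "((\<lambda>t. U (lam*t)) has_real_derivative u (lam*t) * lam) (at t within {0..})"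
    using DERIV_image_chain[OF d1 d2] by (simp add: comp_def)
  have d4: "((\<lambda>t. U (lam*t) / lam) has_real_derivative u (lam*t) * lam / lam) (at t within {0..})"
    by (rule DERIV_cdivide[OF d3])
  have dY: "(Y has_real_derivative w (X t, Y t) + u (lam * t)) (at t within {0..})"
    using sol t unfolding is_solution_def by blast
  have "((\<lambda>t. Y t - U (lam*t) / lam) has_real_derivative w (X t, Y t) + u (lam * t) - u (lam*t) * lam / lam) (at t within {0..})"
    by (rule DERIV_diff[OF dY d4])
  then show ?thesis using lam by simp
qed

lemma partial_y:
  fixes w :: "real \<times> real \<Rightarrow> real"
  assumes "\<And>z. (w has_derivative w' z) (at z)"
  shows "((\<lambda>s. w (x, s)) has_real_derivative w' (x, s) (0, 1)) (at s)"
proof -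
  have p: "((\<lambda>s. (x, s)) has_derivative (\<lambda>h. (0, h))) (at s)"
    by (rule has_derivative_Pair[OF has_derivative_const has_derivative_ident])
  have c: "((w \<circ> (\<lambda>s. (x, s))) has_derivative (w' (x, s) \<circ> (\<lambda>h. (0, h)))) (at s)"
    by (rule diff_chain_at[OF p assms])
  have lin: "linear (w' (x,s))" using assms[of "(x,s)"] by (simp add: has_derivative_def bounded_linear.linear)
  have e: "(w' (x, s) \<circ> (\<lambda>h. (0, h))) = (\<lambda>h. w' (x, s) (0, 1) * h)"
  proof
    fix h :: real
    have "w' (x,s) (h *\<^sub>R (0,1)) = h *\<^sub>R w' (x,s) (0,1)" by (rule linear_scale[OF lin])
    then show "(w' (x, s) \<circ> (\<lambda>h. (0, h))) h = w' (x, s) (0, 1) * h" by simp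
  qed
  show ?thesis using c unfolding e has_field_derivative_def by (simp add: comp_def)
qed

lemma rho:
  fixes w :: "real \<times> real \<Rightarrow> real"
  assumes c1: "Ck 1 w"
    and bdd: "\<exists>\<delta>>0. \<exists>B. \<forall>x y. (\<bar>y - 1\<bar> < \<delta> \<or> \<bar>y + 1\<bar> < \<delta>) \<longrightarrow> \<bar>deriv (\<lambda>s. w (x, s)) y\<bar> \<le> B"
    and bnd: "\<exists>a>0. \<forall>x. w (x, 1) > a \<and> w (x, -1) < - a"
  shows "\<exists>\<rho>>0. \<rho> \<le> 1/2 \<and> (\<forall>x y. 1-\<rho> \<le> y \<and> y \<le> 1 \<longrightarrow> w (x,y) > 0)
            \<and> (\<forall>x y. -1 \<le> y \<and> y \<le> -1+\<rho> \<longrightarrow> w (x,y) < 0)"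
proof -
  obtain w' where d: "\<And>z. (w has_derivative w' z) (at z)"
    using Ck1_D[OF c1] by blast
  obtain \<delta> B where \<delta>: "\<delta> > 0" and B: "\<And>x y. (\<bar>y - 1\<bar> < \<delta> \<or> \<bar>y + 1\<bar> < \<delta>) \<Longrightarrow> \<bar>deriv (\<lambda>s. w (x, s)) y\<bar> \<le> B"
    using bdd by blast
  obtain a where a: "a > 0" "\<And>x. w (x, 1) > a" "\<And>x. w (x, -1) < - a" using bnd by blast
  have D: "\<And>x s. DERIV (\<lambda>s. w (x, s)) s :> w' (x, s) (0, 1)" by (rule partial_y[OF d])
  have dv: "\<And>x s. deriv (\<lambda>s. w (x, s)) s = w' (x, s) (0, 1)" by (rule DERIV_imp_deriv[OF D])
  define \<rho> where "\<rho> = min (1/2) (min (\<delta>/2) (a / (2*(\<bar>B\<bar>+1))))"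
  have \<rho>0: "\<rho> > 0" unfolding \<rho>_def using \<delta> a by simp
  have r1: "\<rho> \<le> 1/2" "\<rho> \<le> \<delta>/2" "\<rho> \<le> a / (2*(\<bar>B\<bar>+1))" unfolding \<rho>_def
    by (rule min.cobounded1, rule order.trans[OF min.cobounded2 min.cobounded1],
        rule order.trans[OF min.cobounded2 min.cobounded2])
  have \<rho>1: "\<rho> \<le> 1/2" "\<rho> < \<delta>" "\<rho> \<le> a / (2*(\<bar>B\<bar>+1))" using r1 \<delta> by auto
  have \<rho>B: "\<rho> * \<bar>B\<bar> < a"
  proof -
    have "\<rho> * \<bar>B\<bar> \<le> a / (2*(\<bar>B\<bar>+1)) * \<bar>B\<bar>" using \<rho>1(3) by (intro mult_right_mono) auto
    also have "\<dots> < a"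
    proof -
      have p: "a * \<bar>B\<bar> \<ge> 0" using a(1) by simp
      show ?thesis by (simp add: field_simps) (insert p a(1), linarith)
    qed
    finally show ?thesis .
  qed
  have top: "w (x,y) > 0" if y: "1-\<rho> \<le> y" "y \<le> 1" for x y
  proof (cases "y = 1")
    case True then show ?thesis using a(1) a(2)[of x] by simp
  next
    case False
    with y have yl: "y < 1" by simp
    obtain z where z: "y < z" "z < 1" "w (x,1) - w (x,y) = (1 - y) * w' (x,z) (0,1)"
      using MVT2[OF yl, of "\<lambda>s. w (x,s)" "\<lambda>s. w' (x,s) (0,1)"] D by blast
    have "\<bar>z - 1\<bar> < \<delta>" using z y \<rho>1 by auto
    then have "\<bar>w' (x,z) (0,1)\<bar> \<le> B" using B[of z x] dv by auto
    then have dd: "w' (x,z) (0,1) \<le> \<bar>B\<bar>" by linarith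
    have "(1 - y) * w' (x,z) (0,1) \<le> (1 - y) * \<bar>B\<bar>"
      using y yl dd by (intro mult_left_mono) auto
    also have "\<dots> \<le> \<rho> * \<bar>B\<bar>" using y by (intro mult_right_mono) auto
    finally have "(1 - y) * w' (x,z) (0,1) \<le> \<rho> * \<bar>B\<bar>" .
    then show ?thesis using z(3) \<rho>B a(2)[of x] by linarith
  qed
  have bot: "w (x,y) < 0" if y: "-1 \<le> y" "y \<le> -1+\<rho>" for x y
  proof (cases "y = -1")
    case True then show ?thesis using a(1) a(3)[of x] by simp
  next
    case False
    with y have yl: "-1 < y" by simp
    obtain z where z: "-1 < z" "z < y" "w (x,y) - w (x,-1) = (y - -1) * w' (x,z) (0,1)"
      using MVT2[OF yl, of "\<lambda>s. w (x,s)" "\<lambda>s. w' (x,s) (0,1)"] D by blast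
    have "\<bar>z + 1\<bar> < \<delta>" using z y \<rho>1 by auto
    then have "\<bar>w' (x,z) (0,1)\<bar> \<le> B" using B[of z x] dv by auto
    then have dd: "w' (x,z) (0,1) \<le> \<bar>B\<bar>" by linarith
    have "(y - -1) * w' (x,z) (0,1) \<le> (y - -1) * \<bar>B\<bar>"
      using y yl dd by (intro mult_left_mono) auto
    also have "\<dots> \<le> \<rho> * \<bar>B\<bar>" using y by (intro mult_right_mono) auto
    finally have "(y - -1) * w' (x,z) (0,1) \<le> \<rho> * \<bar>B\<bar>" .
    then show ?thesis using z(3) \<rho>B a(3)[of x] by linarith
  qed
  show ?thesis using \<rho>0 \<rho>1 top bot by blast
qed



theorem theorem2p3:
  fixes v w :: "real \<times> real \<Rightarrow> real" and u :: "real \<Rightarrow> real"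
  assumes smooth: "C_inf v" "C_inf w" "C_inf u"
    and bdd: "\<exists>\<delta>>0. \<exists>B. \<forall>x y. (\<bar>y - 1\<bar> < \<delta> \<or> \<bar>y + 1\<bar> < \<delta>) \<longrightarrow>
                 \<bar>v (x, y)\<bar> \<le> B \<and> \<bar>w (x, y)\<bar> \<le> B \<and>
                 \<bar>deriv (\<lambda>s. v (s, y)) x\<bar> \<le> B \<and> \<bar>deriv (\<lambda>s. v (x, s)) y\<bar> \<le> B \<and>
                 \<bar>deriv (\<lambda>s. w (s, y)) x\<bar> \<le> B \<and> \<bar>deriv (\<lambda>s. w (x, s)) y\<bar> \<le> B"
    and bnd: "\<exists>a>0. \<forall>x. w (x, 1) > a \<and> w (x, -1) < - a"
    and per: "\<exists>T>0. (\<forall>t. u (t + T) = u t) \<and> (1 / T) * integral {0..T} u = 0"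
    and global: "\<forall>lam x0 y0. \<bar>y0\<bar> \<le> 1 \<longrightarrow>
                   (\<exists>X Y. is_solution v w u lam X Y \<and> X 0 = x0 \<and> Y 0 = y0)"
  shows "\<exists>lam0>0. \<forall>lam\<ge>lam0. \<exists>X Y. is_solution v w u lam X Y \<and> (\<forall>t\<ge>0. \<bar>Y t\<bar> < 1)"
proof -
  have c1v: "Ck 1 v" using smooth(1) unfolding C_inf_def by blast
  have c1w: "Ck 1 w" using smooth(2) unfolding C_inf_def by blast
  have "Ck 0 u" using smooth(3) unfolding C_inf_def by blast
  then have cu: "continuous_on UNIV u" by simp
  have lipv: "\<And>R. \<exists>L\<ge>0. \<forall>p\<in>cball 0 R. \<forall>q\<in>cball 0 R. \<bar>v p - v q\<bar> \<le> L * dist p q"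
    by (rule lip[OF c1v])
  have lipw: "\<And>R. \<exists>L\<ge>0. \<forall>p\<in>cball 0 R. \<forall>q\<in>cball 0 R. \<bar>w p - w q\<bar> \<le> L * dist p q"
    by (rule lip[OF c1w])
  obtain T where T: "T > 0" "\<forall>t. u (t + T) = u t" "(1 / T) * integral {0..T} u = 0"
    using per by blast
  have int0: "integral {0..T} u = 0" using T(1) T(3) by simp
  obtain U M where U: "U 0 = 0" "\<forall>s\<ge>0. (U has_real_derivative u s) (at s within {0..})"
      "\<forall>s\<ge>0. \<bar>U s\<bar> \<le> M"
    using U_props[OF cu T(1) _ int0] T(2) by blast
  have M0: "M \<ge> 0" using U(3) U(1) by force
  have bdd': "\<exists>\<delta>>0. \<exists>B. \<forall>x y. (\<bar>y - 1\<bar> < \<delta> \<or> \<bar>y + 1\<bar> < \<delta>) \<longrightarrow> \<bar>deriv (\<lambda>s. w (x, s)) y\<bar> \<le> B"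
  proof -
    obtain \<delta> B where "\<delta> > 0" "\<forall>x y. (\<bar>y - 1\<bar> < \<delta> \<or> \<bar>y + 1\<bar> < \<delta>) \<longrightarrow>
                 \<bar>v (x, y)\<bar> \<le> B \<and> \<bar>w (x, y)\<bar> \<le> B \<and>
                 \<bar>deriv (\<lambda>s. v (s, y)) x\<bar> \<le> B \<and> \<bar>deriv (\<lambda>s. v (x, s)) y\<bar> \<le> B \<and>
                 \<bar>deriv (\<lambda>s. w (s, y)) x\<bar> \<le> B \<and> \<bar>deriv (\<lambda>s. w (x, s)) y\<bar> \<le> B"
      using bdd by blast
    then show ?thesis by blast
  qed
  obtain \<rho> where \<rho>: "\<rho> > 0" "\<rho> \<le> 1/2"
    and top: "\<And>x y. 1-\<rho> \<le> y \<Longrightarrow> y \<le> 1 \<Longrightarrow> w (x,y) > 0"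
    and bot: "\<And>x y. -1 \<le> y \<Longrightarrow> y \<le> -1+\<rho> \<Longrightarrow> w (x,y) < 0"
    using rho[OF c1w bdd' bnd] by blast
  define lam0 where "lam0 = max 1 (2*M/\<rho>)"
  show ?thesis
  proof (intro exI[of _ lam0] conjI allI impI)
    show "0 < lam0" by (simp add: lam0_def)
    fix lam assume "lam0 \<le> lam"
    then have lam: "lam > 0" "2*M/\<rho> \<le> lam" by (auto simp: lam0_def)
    define \<eta> where "\<eta> = M/lam"
    have \<eta>0: "0 \<le> \<eta>" unfolding \<eta>_def using M0 lam by simp
    have "2*M \<le> lam * \<rho>" using lam(2) \<rho>(1) by (simp add: pos_divide_le_eq)
    then have \<eta>1: "\<eta> \<le> \<rho>/2" unfolding \<eta>_def using lam(1) by (simp add: pos_divide_le_eq algebra_simps)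
    define c where "c = 1 - \<eta>"
    have c: "c > 0" "c \<le> 1" unfolding c_def using \<eta>0 \<eta>1 \<rho> by auto
    have Ub: "\<bar>U (lam*t) / lam\<bar> \<le> \<eta>" if "t \<ge> 0" for t
    proof -
      have "\<bar>U (lam*t)\<bar> \<le> M" using U(3) that lam by simp
      then show ?thesis unfolding \<eta>_def using lam by (simp add: divide_right_mono)
    qed
    have gd: "((\<lambda>t. Y t - U (lam*t) / lam) has_real_derivative w (X t, Y t)) (at t within {0..})"
      if "is_solution v w u lam X Y" "t \<ge> 0" for X Y t
      using gderiv[OF that(1) lam(1) U(2) that(2)] .
    have gc: "continuous_on {0..} (\<lambda>t. Y t - U (lam*t) / lam)"
      if "is_solution v w u lam X Y" for X Y
      by (rule DERIV_continuous_on[OF gd[OF that]]) auto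
    have wtop: "w (X t, Y t) > 0" if "t \<ge> 0" "Y t - U (lam*t) / lam = c" for X Y t
    proof -
      have q: "U (lam*t) / lam \<le> \<eta> \<and> - (U (lam*t) / lam) \<le> \<eta>"
        using Ub[OF that(1)] by (simp only: abs_le_iff)
      show ?thesis using q that(2) \<eta>1 \<eta>0 unfolding c_def by (intro top) linarith+
    qed
    have wbot: "w (X t, Y t) < 0" if "t \<ge> 0" "Y t - U (lam*t) / lam = -c" for X Y t
    proof -
      have q: "U (lam*t) / lam \<le> \<eta> \<and> - (U (lam*t) / lam) \<le> \<eta>"
        using Ub[OF that(1)] by (simp only: abs_le_iff)
      show ?thesis using q that(2) \<eta>1 \<eta>0 unfolding c_def by (intro bot) linarith+
    qed
    define S where "S y0 = (SOME XY. is_solution v w u lam (fst XY) (snd XY) \<and> fst XY 0 = 0 \<and> snd XY 0 = y0)" for y0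
    have Ssol: "is_solution v w u lam (fst (S y0)) (snd (S y0)) \<and> fst (S y0) 0 = 0 \<and> snd (S y0) 0 = y0"
      if y1: "\<bar>y0\<bar> \<le> 1" for y0
    proof -
      obtain X Y where "is_solution v w u lam X Y \<and> X 0 = 0 \<and> Y 0 = y0"
        using global y1 by blast
      then have "(\<lambda>XY. is_solution v w u lam (fst XY) (snd XY) \<and> fst XY 0 = 0 \<and> snd XY 0 = y0) (X,Y)"
        by simp
      then show ?thesis unfolding S_def by (rule someI)
    qed
    define G where "G y0 t = snd (S y0) t - U (lam*t) / lam" for y0 t
    define I where "I = {-c..c}"
    have inI: "\<bar>y0\<bar> \<le> 1" if "y0 \<in> I" for y0 using that c unfolding I_def by auto
    have solI: "is_solution v w u lam (fst (S y0)) (snd (S y0))" if "y0 \<in> I" for y0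
      using Ssol[OF inI[OF that]] by blast
    have G0: "G y0 0 = y0" if "y0 \<in> I" for y0
      using Ssol[OF inI[OF that]] U(1) unfolding G_def by simp
    have Gc: "continuous_on {0..} (G y0)" if "y0 \<in> I" for y0
      unfolding G_def[abs_def] using gc[OF solI[OF that]] by simp
    have Gd: "(G y0 has_real_derivative w (fst (S y0) t, snd (S y0) t)) (at t within {0..})"
      if "y0 \<in> I" "t \<ge> 0" for y0 t
      unfolding G_def[abs_def] using gd[OF solI[OF that(1)] that(2)] by simp
    have Gdiff: "G y1 s - G y0 s = snd (S y1) s - snd (S y0) s" for y0 y1 s
      unfolding G_def by simp
    have dep: "\<exists>\<epsilon>>0. \<forall>y1\<in>I. dist y1 y0 < \<epsilon> \<longrightarrow> (\<forall>s\<in>{0..\<tau>}. \<bar>G y1 s - G y0 s\<bar> < m)"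
      if dy: "y0 \<in> I" "\<tau> \<ge> 0" "m > 0" for y0 \<tau> m
    proof -
      obtain \<epsilon> where \<epsilon>: "\<epsilon> > 0" and h: "\<forall>X' Y'. is_solution v w u lam X' Y' \<and>
          dist (X' 0, Y' 0) (fst (S y0) 0, snd (S y0) 0) < \<epsilon> \<longrightarrow> (\<forall>s\<in>{0..\<tau>}. \<bar>Y' s - snd (S y0) s\<bar> < m)"
        using contdep[OF lipv lipw solI[OF dy(1)] dy(2) dy(3)] by blast
      show ?thesis
      proof (intro exI[of _ \<epsilon>] conjI \<epsilon> ballI impI)
        fix y1 s assume y1: "y1 \<in> I" "dist y1 y0 < \<epsilon>" and s: "s \<in> {0..\<tau>}"
        have "dist (fst (S y1) 0, snd (S y1) 0) (fst (S y0) 0, snd (S y0) 0) < \<epsilon>"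
          using Ssol[OF inI[OF y1(1)]] Ssol[OF inI[OF dy(1)]] y1(2)
          by (simp add: dist_Pair_Pair dist_real_def)
        then show "\<bar>G y1 s - G y0 s\<bar> < m" unfolding Gdiff using h solI[OF y1(1)] s by blast
      qed
    qed
    define A where "A = {y0\<in>I. \<exists>t\<ge>0. G y0 t \<ge> c \<and> (\<forall>s\<in>{0..t}. G y0 s > -c)}"
    define B where "B = {y0\<in>I. \<exists>t\<ge>0. G y0 t \<le> -c \<and> (\<forall>s\<in>{0..t}. G y0 s < c)}"
    have Aopen: "openin (top_of_set I) A"
      unfolding openin_euclidean_subtopology_iff
    proof (intro conjI ballI)
      show "A \<subseteq> I" unfolding A_def by auto
      fix y0 assume "y0 \<in> A"
      then obtain t where y0: "y0 \<in> I" and t: "t \<ge> 0" "G y0 t \<ge> c" "\<forall>s\<in>{0..t}. G y0 s > -c"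
        unfolding A_def by blast
      have "\<exists>t2\<ge>0. G y0 t2 > c \<and> (\<forall>s\<in>{0..t2}. G y0 s > -c)"
      proof (cases "G y0 t > c")
        case True then show ?thesis using t by blast
      next
        case False
        then have eq: "G y0 t = c" using t by simp
        have pos: "w (fst (S y0) t, snd (S y0) t) > 0"
          by (rule wtop[OF t(1)]) (use eq in \<open>simp add: G_def\<close>)
        obtain d where d: "d > 0" "\<forall>h>0. t + h \<in> {0..} \<longrightarrow> h < d \<longrightarrow> G y0 t < G y0 (t + h)"
          using has_real_derivative_pos_inc_right[OF Gd[OF y0 t(1)] pos] by blast
        show ?thesis
        proof (intro exI[of _ "t + d/2"] conjI ballI)
          show "0 \<le> t + d/2" using t d by simp
          show "c < G y0 (t + d/2)" using d t eq by auto
          fix s assume s: "s \<in> {0..t + d/2}"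
          show "- c < G y0 s"
          proof (cases "s \<le> t")
            case True then show ?thesis using t s by auto
          next
            case False
            then have "G y0 t < G y0 (t + (s - t))" using d(2)[rule_format, of "s - t"] d(1) s t by auto
            then show ?thesis using eq c by simp
          qed
        qed
      qed
      then obtain t2 where t2: "t2 \<ge> 0" "G y0 t2 > c" "\<forall>s\<in>{0..t2}. G y0 s > -c" by blast
      have cG: "continuous_on {0..t2} (G y0)" using Gc[OF y0] by (rule continuous_on_subset) auto
      obtain smin where smin: "smin \<in> {0..t2}" "\<forall>s\<in>{0..t2}. G y0 smin \<le> G y0 s"
        using continuous_attains_inf[OF compact_Icc _ cG] t2(1) by auto
      define m where "m = min (G y0 smin + c) (G y0 t2 - c)"
      have "G y0 smin > -c" using t2(3) smin(1) by blast
      then have m: "m > 0" unfolding m_def using t2 by auto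
      obtain \<epsilon> where \<epsilon>: "\<epsilon> > 0" "\<forall>y1\<in>I. dist y1 y0 < \<epsilon> \<longrightarrow> (\<forall>s\<in>{0..t2}. \<bar>G y1 s - G y0 s\<bar> < m)"
        using dep[OF y0 t2(1) m] by blast
      show "\<exists>e>0. \<forall>x'\<in>I. dist x' y0 < e \<longrightarrow> x' \<in> A"
      proof (intro exI[of _ \<epsilon>] conjI \<epsilon>(1) ballI impI)
        fix y1 assume y1: "y1 \<in> I" "dist y1 y0 < \<epsilon>"
        then have cl: "\<forall>s\<in>{0..t2}. \<bar>G y1 s - G y0 s\<bar> < m" using \<epsilon>(2) by blast
        have "G y1 t2 \<ge> c" using cl t2 unfolding m_def by force
        moreover have "\<forall>s\<in>{0..t2}. G y1 s > -c"
        proof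
          fix s assume s: "s \<in> {0..t2}"
          have "\<bar>G y1 s - G y0 s\<bar> < m" using cl s by blast
          moreover have "G y0 smin \<le> G y0 s" using smin s by blast
          ultimately show "G y1 s > -c" unfolding m_def by linarith
        qed
        ultimately show "y1 \<in> A" unfolding A_def using y1 t2(1) by blast
      qed
    qed
    have Bopen: "openin (top_of_set I) B"
      unfolding openin_euclidean_subtopology_iff
    proof (intro conjI ballI)
      show "B \<subseteq> I" unfolding B_def by auto
      fix y0 assume "y0 \<in> B"
      then obtain t where y0: "y0 \<in> I" and t: "t \<ge> 0" "G y0 t \<le> -c" "\<forall>s\<in>{0..t}. G y0 s < c"
        unfolding B_def by blast
      have "\<exists>t2\<ge>0. G y0 t2 < -c \<and> (\<forall>s\<in>{0..t2}. G y0 s < c)"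
      proof (cases "G y0 t < -c")
        case True then show ?thesis using t by blast
      next
        case False
        then have eq: "G y0 t = -c" using t by simp
        have neg: "w (fst (S y0) t, snd (S y0) t) < 0"
          by (rule wbot[OF t(1)]) (use eq in \<open>simp add: G_def\<close>)
        obtain d where d: "d > 0" "\<forall>h>0. t + h \<in> {0..} \<longrightarrow> h < d \<longrightarrow> G y0 t > G y0 (t + h)"
          using has_real_derivative_neg_dec_right[OF Gd[OF y0 t(1)] neg] by blast
        show ?thesis
        proof (intro exI[of _ "t + d/2"] conjI ballI)
          show "0 \<le> t + d/2" using t d by simp
          show "G y0 (t + d/2) < -c" using d t eq by auto
          fix s assume s: "s \<in> {0..t + d/2}"
          show "G y0 s < c"
          proof (cases "s \<le> t")
            case True then show ?thesis using t s by auto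
          next
            case False
            then have "G y0 t > G y0 (t + (s - t))" using d(2)[rule_format, of "s - t"] d(1) s t by auto
            then show ?thesis using eq c by simp
          qed
        qed
      qed
      then obtain t2 where t2: "t2 \<ge> 0" "G y0 t2 < -c" "\<forall>s\<in>{0..t2}. G y0 s < c" by blast
      have cG: "continuous_on {0..t2} (G y0)" using Gc[OF y0] by (rule continuous_on_subset) auto
      obtain smax where smax: "smax \<in> {0..t2}" "\<forall>s\<in>{0..t2}. G y0 s \<le> G y0 smax"
        using continuous_attains_sup[OF compact_Icc _ cG] t2(1) by auto
      define m where "m = min (c - G y0 smax) (-c - G y0 t2)"
      have "G y0 smax < c" using t2(3) smax(1) by blast
      then have m: "m > 0" unfolding m_def using t2 by auto
      obtain \<epsilon> where \<epsilon>: "\<epsilon> > 0" "\<forall>y1\<in>I. dist y1 y0 < \<epsilon> \<longrightarrow> (\<forall>s\<in>{0..t2}. \<bar>G y1 s - G y0 s\<bar> < m)"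
        using dep[OF y0 t2(1) m] by blast
      show "\<exists>e>0. \<forall>x'\<in>I. dist x' y0 < e \<longrightarrow> x' \<in> B"
      proof (intro exI[of _ \<epsilon>] conjI \<epsilon>(1) ballI impI)
        fix y1 assume y1: "y1 \<in> I" "dist y1 y0 < \<epsilon>"
        then have cl: "\<forall>s\<in>{0..t2}. \<bar>G y1 s - G y0 s\<bar> < m" using \<epsilon>(2) by blast
        have "G y1 t2 \<le> -c" using cl t2 unfolding m_def by force
        moreover have "\<forall>s\<in>{0..t2}. G y1 s < c"
        proof
          fix s assume s: "s \<in> {0..t2}"
          have "\<bar>G y1 s - G y0 s\<bar> < m" using cl s by blast
          moreover have "G y0 s \<le> G y0 smax" using smax s by blast
          ultimately show "G y1 s < c" unfolding m_def by linarith
        qed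
        ultimately show "y1 \<in> B" unfolding B_def using y1 t2(1) by blast
      qed
    qed
    have disj: "A \<inter> B = {}"
    proof (rule ccontr)
      assume "A \<inter> B \<noteq> {}"
      then obtain y0 t1 t2 where "t1 \<ge> 0" "G y0 t1 \<ge> c" "\<forall>s\<in>{0..t1}. G y0 s > -c"
          "t2 \<ge> 0" "G y0 t2 \<le> -c" "\<forall>s\<in>{0..t2}. G y0 s < c"
        unfolding A_def B_def by blast
      then show False
        by (cases "t1 \<le> t2") force+
    qed
    have cA: "c \<in> A"
    proof -
      have "c \<in> I" unfolding I_def using c by simp
      then show ?thesis unfolding A_def using G0 c by (intro CollectI conjI exI[of _ 0]) auto
    qed
    have cB: "-c \<in> B"
    proof -
      have "-c \<in> I" unfolding I_def using c by simp
      then show ?thesis unfolding B_def using G0 c by (intro CollectI conjI exI[of _ 0]) auto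
    qed
    have "\<exists>y0\<in>I. \<forall>t\<ge>0. \<bar>G y0 t\<bar> < c"
    proof (rule ccontr)
      assume H: "\<not> ?thesis"
      have cover: "I \<subseteq> A \<union> B"
      proof
        fix y0 assume y0: "y0 \<in> I"
        then obtain t0 where t0: "t0 \<ge> 0" "\<bar>G y0 t0\<bar> \<ge> c" using H by force
        define E where "E = {0..} \<inter> (\<lambda>t. \<bar>G y0 t\<bar>) -` {c..}"
        have Ene: "E \<noteq> {}" using t0 unfolding E_def by auto
        have Ecl: "closed E" unfolding E_def
          by (rule continuous_closed_preimage) (auto intro!: continuous_intros Gc[OF y0])
        have Ebd: "bdd_below E" unfolding E_def by (rule bdd_belowI[of _ 0]) auto
        define ts where "ts = Inf E"
        have tsE: "ts \<in> E" unfolding ts_def by (rule closed_contains_Inf[OF Ene Ebd Ecl])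
        have low: "\<And>s. s \<in> E \<Longrightarrow> ts \<le> s" unfolding ts_def using Ebd by (simp add: cInf_lower)
        have ts: "ts \<ge> 0" "\<bar>G y0 ts\<bar> \<ge> c" using tsE unfolding E_def by auto
        have before: "\<bar>G y0 s\<bar> < c" if "s \<in> {0..<ts}" for s
        proof (rule ccontr)
          assume "\<not> \<bar>G y0 s\<bar> < c"
          then have "s \<in> E" using that unfolding E_def by auto
          then show False using low that by force
        qed
        show "y0 \<in> A \<union> B"
        proof (cases "G y0 ts \<ge> c")
          case True
          have "\<forall>s\<in>{0..ts}. G y0 s > -c"
          proof
            fix s assume s: "s \<in> {0..ts}"
            show "G y0 s > -c"
            proof (cases "s = ts")
              case True then show ?thesis using \<open>G y0 ts \<ge> c\<close> c by simp
            next
              case False then show ?thesis using before[of s] s by auto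
            qed
          qed
          then show ?thesis unfolding A_def using y0 ts True by blast
        next
          case False
          then have le: "G y0 ts \<le> -c" using ts by auto
          have "\<forall>s\<in>{0..ts}. G y0 s < c"
          proof
            fix s assume s: "s \<in> {0..ts}"
            show "G y0 s < c"
            proof (cases "s = ts")
              case True then show ?thesis using le c by simp
            next
              case False then show ?thesis using before[of s] s by auto
            qed
          qed
          then show ?thesis unfolding B_def using y0 ts le by blast
        qed
      qed
      have "connected I" unfolding I_def by simp
      then show False
        unfolding connected_openin using Aopen Bopen cover disj cA cB by blast
    qed
    then obtain y0 where y0: "y0 \<in> I" "\<forall>t\<ge>0. \<bar>G y0 t\<bar> < c" by blast
    show "\<exists>X Y. is_solution v w u lam X Y \<and> (\<forall>t\<ge>0. \<bar>Y t\<bar> < 1)"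
    proof -
      have bd: "\<forall>t\<ge>0. \<bar>snd (S y0) t\<bar> < 1"
      proof (intro allI impI)
        fix t :: real assume t: "t \<ge> 0"
        have "\<bar>G y0 t\<bar> < c" using y0(2) t by blast
        moreover have "\<bar>U (lam*t) / lam\<bar> \<le> \<eta>" by (rule Ub[OF t])
        ultimately show "\<bar>snd (S y0) t\<bar> < 1" unfolding G_def c_def by linarith
      qed
      show ?thesis using solI[OF y0(1)] bd by blast
    qed
  qed
qed


end
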